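(* For $p\le \log r$, every deterministic online algorithm for the Online Mixed Packing and Covering problem with objective the $\ell_p$ norm of the violation vector $\vec\lambda=(\lambda_1,\dots,\lambda_r)$ has competitive ratio $\Omega(p\log(d/\log r))$. This holds even when all entries of the covering and packing matrices are in $\{0,1\}$.
   Context: Online Mixed Packing and Covering: there are $m$ non-negative variables $\vec x$, initially $0$, which may only increase over time. A set of $r$ packing constraints $P\vec x\le \vec p$ (with $P\in\mathbb{R}_{\ge0}^{r\times m}$, $\vec p>0$) is known offline; covering constraints $\sum_i C_{ji}x_i\ge c_j$ with non-negative entries arrive online one at a time and must be satisfied upon arrival by increasing variables. For each packing constraint $k$, the violation is $\lambda_k=\frac{\sum_i P_{ki}x_i}{p_k}$, and the objective is $\big(\sum_{k=1}^r\lambda_k^p\big)^{1/p}$, compared with the optimum offline value. $d$ is the maximum number of variables appearing in any packing or covering constraint. *)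

theory Defs
  imports Complex_Main
begin

text \<open>Variables are indexed by i < m; packing constraints by k < r
  (matrix Pm :: nat => nat => real, right-hand sides pv :: nat => real).
  A covering constraint is a pair (C, c) of a row C :: nat => real and a
  right-hand side c, meaning  sum_{i<m} C i * x i >= c.\<close>

type_synonym cover = "(nat \<Rightarrow> real) \<times> real"

text \<open>A deterministic online algorithm: given the offline data (m, Pm, pv) and the
  list of covering constraints revealed so far, it outputs the current
  assignment of the variables.  Being a function of the revealed prefix only,
  it is automatically deterministic and online.\<close>

type_synonym online_algorithm =
  "nat \<Rightarrow> (nat \<Rightarrow> nat \<Rightarrow> real) \<Rightarrow> (nat \<Rightarrow> real) \<Rightarrow> cover list \<Rightarrow> (nat \<Rightarrow> real)"

definition support_size :: "nat \<Rightarrow> (nat \<Rightarrow> real) \<Rightarrow> nat" where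
  "support_size m row = card {i. i < m \<and> row i \<noteq> 0}"

definition zero_one_row :: "nat \<Rightarrow> (nat \<Rightarrow> real) \<Rightarrow> bool" where
  "zero_one_row m row \<longleftrightarrow> (\<forall>i<m. row i = 0 \<or> row i = 1)"

text \<open>Covering
  constraints have positive right-hand side and at least one variable
  (so that they can be satisfied).\<close>

definition wf_instance ::
  "nat \<Rightarrow> nat \<Rightarrow> nat \<Rightarrow> (nat \<Rightarrow> nat \<Rightarrow> real) \<Rightarrow> (nat \<Rightarrow> real) \<Rightarrow> cover list \<Rightarrow> bool" where
  "wf_instance r d m Pm pv cs \<longleftrightarrow>
     (\<forall>k<r. zero_one_row m (Pm k) \<and> 0 < pv k \<and> support_size m (Pm k) \<le> d) \<and>
     (\<forall>(C, c) \<in> set cs. zero_one_row m C \<and> 0 < c \<and>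
         1 \<le> support_size m C \<and> support_size m C \<le> d)"

definition max_sparsity_eq ::
  "nat \<Rightarrow> nat \<Rightarrow> nat \<Rightarrow> (nat \<Rightarrow> nat \<Rightarrow> real) \<Rightarrow> cover list \<Rightarrow> bool" where
  "max_sparsity_eq r d m Pm cs \<longleftrightarrow>
     (\<exists>k<r. support_size m (Pm k) = d) \<or> (\<exists>(C, c) \<in> set cs. support_size m C = d)"

definition violation :: "nat \<Rightarrow> (nat \<Rightarrow> nat \<Rightarrow> real) \<Rightarrow> (nat \<Rightarrow> real) \<Rightarrow> (nat \<Rightarrow> real) \<Rightarrow> nat \<Rightarrow> real" where
  "violation m Pm pv x k = (\<Sum>i<m. Pm k i * x i) / pv k"

definition lp_objective ::
  "nat \<Rightarrow> real \<Rightarrow> nat \<Rightarrow> (nat \<Rightarrow> nat \<Rightarrow> real) \<Rightarrow> (nat \<Rightarrow> real) \<Rightarrow> (nat \<Rightarrow> real) \<Rightarrow> real" where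
  "lp_objective r p m Pm pv x = (\<Sum>k<r. violation m Pm pv x k powr p) powr (1 / p)"

definition feasible :: "nat \<Rightarrow> cover list \<Rightarrow> (nat \<Rightarrow> real) \<Rightarrow> bool" where
  "feasible m cs x \<longleftrightarrow> (\<forall>i<m. 0 \<le> x i) \<and> (\<forall>(C, c) \<in> set cs. c \<le> (\<Sum>i<m. C i * x i))"

definition opt_value ::
  "nat \<Rightarrow> real \<Rightarrow> nat \<Rightarrow> (nat \<Rightarrow> nat \<Rightarrow> real) \<Rightarrow> (nat \<Rightarrow> real) \<Rightarrow> cover list \<Rightarrow> real" where
  "opt_value r p m Pm pv cs = Inf (lp_objective r p m Pm pv ` {x. feasible m cs x})"

definition valid_online_alg :: "nat \<Rightarrow> nat \<Rightarrow> online_algorithm \<Rightarrow> bool" where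
  "valid_online_alg r d alg \<longleftrightarrow>
     (\<forall>m Pm pv cs. wf_instance r d m Pm pv cs \<longrightarrow>
        (\<forall>i<m. alg m Pm pv [] i = 0) \<and>
        feasible m cs (alg m Pm pv cs) \<and>
        (\<forall>cs' c. cs = cs' @ [c] \<longrightarrow> (\<forall>i<m. alg m Pm pv cs' i \<le> alg m Pm pv cs i)))"

definition competitive :: "nat \<Rightarrow> nat \<Rightarrow> real \<Rightarrow> online_algorithm \<Rightarrow> real \<Rightarrow> bool" where
  "competitive r d p alg \<rho> \<longleftrightarrow>
     (\<forall>m Pm pv cs. wf_instance r d m Pm pv cs \<and> max_sparsity_eq r d m Pm cs \<longrightarrow>
        lp_objective r p m Pm pv (alg m Pm pv cs) \<le> \<rho> * opt_value r p m Pm pv cs)"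

end

theory Submission
  imports Defs
begin


lemma sum_indicator_image:
  fixes f :: "'a \<Rightarrow> nat" and x :: "nat \<Rightarrow> real"
  assumes "inj_on f A" "f ` A \<subseteq> {..<m}" "finite A"
  shows "(\<Sum>i<m. (if i \<in> f ` A then 1 else 0) * x i) = (\<Sum>a\<in>A. x (f a))"
proof -
  have "(\<Sum>i<m. (if i \<in> f ` A then 1 else 0) * x i) = (\<Sum>i\<in>{..<m}. if i \<in> f ` A then x i else 0)"
    by (rule sum.cong) auto
  also have "\<dots> = (\<Sum>i\<in>{..<m} \<inter> f ` A. x i)"
    by (simp add: sum.inter_restrict)
  also have "{..<m} \<inter> f ` A = f ` A" using assms(2) by auto
  also have "(\<Sum>i\<in>f ` A. x i) = (\<Sum>a\<in>A. x (f a))"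
    using assms(1) by (simp add: sum.reindex)
  finally show ?thesis .
qed

locale lb =
  fixes alg :: online_algorithm and r d q a :: nat
  assumes valid: "valid_online_alg r d alg"
    and q1: "1 \<le> q" and qr: "2^q \<le> r" and a1: "1 \<le> a" and qd: "2 * q * 2^a \<le> d"
begin

definition "t = (2::nat)^a"
definition "B = (q+1) * 2^q * t"
definition "m = B + d"
definition enc :: "nat \<Rightarrow> nat \<Rightarrow> nat \<Rightarrow> nat" where "enc j c s = (j * 2^q + c) * t + s"
definition "RA = {1..q} \<times> {..<t}"
definition rowvar :: "nat \<Rightarrow> nat \<times> nat \<Rightarrow> nat" where
  "rowvar k = (\<lambda>(j,s). enc j (k div 2^(q-j)) s)"
definition Pm :: "nat \<Rightarrow> nat \<Rightarrow> real" where
  "Pm k i = (if k < 2^q \<and> i \<in> rowvar k ` RA then 1 else 0)"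
definition pv :: "nat \<Rightarrow> real" where "pv k = 1"
definition X :: "cover list \<Rightarrow> nat \<Rightarrow> real" where "X cs = alg m Pm pv cs"
definition rowload :: "nat \<Rightarrow> (nat \<Rightarrow> real) \<Rightarrow> real" where
  "rowload k x = (\<Sum>js\<in>RA. x (rowvar k js))"
definition goodc :: "cover \<Rightarrow> bool" where
  "goodc C \<longleftrightarrow> zero_one_row m (fst C) \<and> 0 < snd C \<and> 1 \<le> support_size m (fst C) \<and> support_size m (fst C) \<le> d"
definition dummy :: cover where
  "dummy = ((\<lambda>i. if B \<le> i \<and> i < B + d then 1 else 0), 1)"
definition LA :: "nat \<Rightarrow> nat \<Rightarrow> nat set" where "LA lo len = {lo..<lo+len}"
definition lvar :: "nat \<Rightarrow> nat \<Rightarrow> nat \<times> nat \<Rightarrow> nat" where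
  "lvar j c = (\<lambda>(b,s). enc (j+1) (2*c+b) s)"
definition lvl :: "nat \<Rightarrow> nat \<Rightarrow> nat \<Rightarrow> nat \<Rightarrow> cover" where
  "lvl j c lo len = ((\<lambda>i. if i \<in> lvar j c ` ({..<2} \<times> {lo..<lo+len}) then 1 else 0), 1)"

lemma zo_ind: "zero_one_row m (\<lambda>i. if P i then 1 else 0)" by (simp add: zero_one_row_def)

lemma ind_collect: "{i. i < m \<and> (if P i then (1::real) else 0) \<noteq> 0} = {i. i < m \<and> P i}"
  by auto

lemma t_pos: "0 < t" by (simp add: t_def)

lemma enc_inj:
  assumes "c < 2^q" "s < t" "c' < 2^q" "s' < t"
  shows "enc j c s = enc j' c' s' \<longleftrightarrow> j = j' \<and> c = c' \<and> s = s'"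
proof
  assume h: "enc j c s = enc j' c' s'"
  have "enc j c s mod t = s" "enc j' c' s' mod t = s'" using assms by (simp_all add: enc_def)
  hence ss: "s = s'" using h by simp
  have "enc j c s div t = j * 2^q + c" "enc j' c' s' div t = j' * 2^q + c'"
    using assms by (simp_all add: enc_def)
  hence e: "j * 2^q + c = j' * 2^q + c'" using h by simp
  have "(j * 2^q + c) div 2^q = j" "(j' * 2^q + c') div 2^q = j'"
    using assms by simp_all
  hence "j = j'" using e by metis
  with e ss show "j = j' \<and> c = c' \<and> s = s'" by simp
qed simp

lemma enc_lt_B:
  assumes "j \<le> q" "c < 2^q" "s < t"
  shows "enc j c s < B"
proof -
  have "enc j c s < (j * 2^q + c + 1) * t" using assms by (simp add: enc_def algebra_simps)
  also have "\<dots> \<le> (q * 2^q + 2^q) * t"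
  proof (intro mult_right_mono)
    have "j * 2^q \<le> q * 2^q" using assms(1) by simp
    then show "j * 2 ^ q + c + 1 \<le> q * 2 ^ q + 2 ^ q" using assms(2) by linarith
  qed simp
  finally show ?thesis by (simp add: B_def algebra_simps)
qed

lemma m_B: "B \<le> m" by (simp add: m_def)

lemma finite_RA: "finite RA" by (simp add: RA_def)
lemma card_RA: "card RA = q * t" by (simp add: RA_def card_cartesian_product)

lemma rowvar_inj: assumes "k < 2^q" shows "inj_on (rowvar k) RA"
proof (rule inj_onI)
  fix x y assume "x \<in> RA" "y \<in> RA" "rowvar k x = rowvar k y"
  moreover have "k div 2^(q - j) < 2^q" for j
    using assms by (meson div_le_dividend le_less_trans)
  ultimately show "x = y"
    by (auto simp: RA_def rowvar_def enc_inj split: prod.splits)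
qed

lemma rowvar_lt: assumes "k < 2^q" shows "rowvar k ` RA \<subseteq> {..<B}"
proof -
  have "k div 2^(q - j) < 2^q" for j
    using assms by (meson div_le_dividend le_less_trans)
  then show ?thesis by (auto simp: RA_def rowvar_def intro!: enc_lt_B)
qed

lemma rowvar_lt_m: assumes "k < 2^q" shows "rowvar k ` RA \<subseteq> {..<m}"
  using rowvar_lt[OF assms] m_B by auto

lemma load_eq: "(\<Sum>i<m. Pm k i * x i) = (if k < 2^q then rowload k x else 0)"
proof (cases "k < 2^q")
  case True
  have "(\<Sum>i<m. Pm k i * x i) = (\<Sum>i<m. (if i \<in> rowvar k ` RA then 1 else 0) * x i)"
    using True by (simp add: Pm_def)
  also have "\<dots> = rowload k x"
    unfolding rowload_def by (rule sum_indicator_image[OF rowvar_inj[OF True] rowvar_lt_m[OF True] finite_RA])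
  finally show ?thesis using True by simp
qed (simp add: Pm_def)

lemma support_row: "support_size m (Pm k) \<le> d"
proof (cases "k < 2^q")
  case True
  have "{i. i < m \<and> Pm k i \<noteq> 0} = rowvar k ` RA"
    using True rowvar_lt_m[OF True] by (auto simp: Pm_def)
  hence "support_size m (Pm k) = q * t"
    using card_image[OF rowvar_inj[OF True]] card_RA by (simp add: support_size_def)
  also have "\<dots> \<le> d" using qd q1 by (simp add: t_def)
  finally show ?thesis .
qed (simp add: Pm_def support_size_def)

lemma wf_iff: "wf_instance r d m Pm pv cs \<longleftrightarrow> (\<forall>C\<in>set cs. goodc C)"
proof -
  have "\<forall>k<r. zero_one_row m (Pm k) \<and> 0 < pv k \<and> support_size m (Pm k) \<le> d"
    by (auto simp: zero_one_row_def Pm_def pv_def support_row)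
  then show ?thesis unfolding wf_instance_def goodc_def by (simp add: case_prod_beta')
qed

lemma X_mono:
  assumes "\<forall>C\<in>set (cs @ ext). goodc C" "i < m"
  shows "X cs i \<le> X (cs @ ext) i"
  using assms(1)
proof (induction ext rule: rev_induct)
  case Nil then show ?case by simp
next
  case (snoc e ext)
  hence "X cs i \<le> X (cs @ ext) i" by auto
  also have "X (cs @ ext) i \<le> X (cs @ ext @ [e]) i"
    using valid snoc.prems assms(2) unfolding valid_online_alg_def X_def
    by (metis append_assoc wf_iff)
  finally show ?case by simp
qed

lemma X_feasible:
  assumes "\<forall>C\<in>set cs. goodc C"
  shows "feasible m cs (X cs)"
  using valid assms unfolding valid_online_alg_def X_def by (metis wf_iff)

lemma dummy_supp: "{i. i < m \<and> fst dummy i \<noteq> 0} = {B..<B+d}"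
  by (auto simp: dummy_def m_def)

lemma d_pos: "2 \<le> d"
proof -
  have "2 * 1 * 1 \<le> 2 * q * 2^a" using q1 by (intro mult_mono) auto
  then show ?thesis using qd by linarith
qed

lemma support_dummy: "support_size m (fst dummy) = d"
  unfolding support_size_def dummy_supp by simp

lemma goodc_dummy: "goodc dummy"
  using support_dummy d_pos by (auto simp: goodc_def zero_one_row_def dummy_def)

lemma lvar_inj:
  assumes "j < q" "c < 2^j" "lo + len \<le> t"
  shows "inj_on (lvar j c) ({..<2} \<times> {lo..<lo+len})"
proof (rule inj_onI)
  have "2 * c + b < 2^q" if "b < 2" for b
  proof -
    have "2 * c + b < 2^(j+1)" using assms that by simp
    also have "\<dots> \<le> 2^q" using assms by (intro power_increasing) auto
    finally show ?thesis .
  qed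
  moreover fix x y assume "x \<in> {..<2} \<times> {lo..<lo+len}" "y \<in> {..<2} \<times> {lo..<lo+len}" "lvar j c x = lvar j c y"
  ultimately show "x = y" using assms
    by (auto simp: lvar_def enc_inj split: prod.splits)
qed

lemma child_lt: fixes c b :: nat assumes "j < q" "c < 2^j" "b < 2" shows "2 * c + b < 2^q"
proof -
  have "2 * c + b < 2^(j+1)" using assms by simp
  also have "\<dots> \<le> 2^q" using assms by (intro power_increasing) auto
  finally show ?thesis .
qed

lemma lvar_lt:
  assumes "j < q" "c < 2^j" "lo + len \<le> t"
  shows "lvar j c ` ({..<2} \<times> {lo..<lo+len}) \<subseteq> {..<B}"
  using assms child_lt[OF assms(1,2)] by (auto simp: lvar_def intro!: enc_lt_B)

lemma lvl_sum:
  assumes "j < q" "c < 2^j" "lo + len \<le> t"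
  shows "(\<Sum>i<m. fst (lvl j c lo len) i * x i) = (\<Sum>b<2. \<Sum>s\<in>{lo..<lo+len}. x (enc (j+1) (2*c+b) s))"
proof -
  have sub: "lvar j c ` ({..<2} \<times> {lo..<lo+len}) \<subseteq> {..<m}"
    by (rule order_trans[OF lvar_lt[OF assms]]) (simp add: m_B)
  have "(\<Sum>i<m. fst (lvl j c lo len) i * x i) = (\<Sum>i<m. (if i \<in> lvar j c ` ({..<2} \<times> {lo..<lo+len}) then 1 else 0) * x i)"
    by (simp only: lvl_def fst_conv)
  also have "\<dots> = (\<Sum>bs\<in>{..<2} \<times> {lo..<lo+len}. x (lvar j c bs))"
    by (rule sum_indicator_image[OF lvar_inj[OF assms] sub]) (rule finite_cartesian_product; simp)
  also have "\<dots> = (\<Sum>b<2. \<Sum>s\<in>{lo..<lo+len}. x (lvar j c (b, s)))"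
    unfolding sum.cartesian_product by (rule sum.cong[OF refl]) (simp add: case_prod_beta)
  also have "\<dots> = (\<Sum>b<2. \<Sum>s\<in>{lo..<lo+len}. x (enc (j+1) (2*c+b) s))"
    by (simp only: lvar_def case_prod_conv)
  finally show ?thesis .
qed

lemma goodc_lvl:
  assumes "j < q" "c < 2^j" "lo + len \<le> t" "1 \<le> len"
  shows "goodc (lvl j c lo len)"
proof -
  let ?S = "lvar j c ` ({..<2} \<times> {lo..<lo+len})"
  have sub: "?S \<subseteq> {..<m}"
    by (rule order_trans[OF lvar_lt[OF assms(1-3)]]) (simp add: m_B)
  have "{i. i < m \<and> fst (lvl j c lo len) i \<noteq> 0} = {i. i < m \<and> i \<in> ?S}"
    unfolding lvl_def fst_conv by (rule ind_collect)
  also have "\<dots> = ?S" using sub by blast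
  finally have e: "{i. i < m \<and> fst (lvl j c lo len) i \<noteq> 0} = ?S" .
  have "card ?S = card ({..<2::nat} \<times> {lo..<lo+len})"
    by (rule card_image[OF lvar_inj[OF assms(1-3)]])
  also have "\<dots> = 2 * len" by (simp only: card_cartesian_product card_lessThan card_atLeastLessThan)
  finally have "support_size m (fst (lvl j c lo len)) = 2 * len"
    unfolding support_size_def e .
  moreover have "2 * len \<le> d"
  proof -
    have "len \<le> t" using assms by simp
    moreover have "t \<le> q * t" using q1 by simp
    ultimately have "2 * len \<le> 2 * q * t" by linarith
    then show ?thesis using qd by (simp add: t_def)
  qed
  moreover have "zero_one_row m (fst (lvl j c lo len))" unfolding lvl_def fst_conv by (rule zo_ind)
  moreover have "snd (lvl j c lo len) = 1" by (simp add: lvl_def)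
  ultimately show ?thesis using assms(4) unfolding goodc_def by simp
qed

end



context lb
begin

definition F :: "(nat \<Rightarrow> real) \<Rightarrow> nat \<Rightarrow> nat \<Rightarrow> nat \<Rightarrow> real" where
  "F x j c s = x (enc (j+1) (2*c) s) + x (enc (j+1) (2*c+1) s)"

lemma lvl_sumF:
  assumes "j < q" "c < 2^j" "lo + len \<le> t"
  shows "(\<Sum>i<m. fst (lvl j c lo len) i * x i) = (\<Sum>s\<in>{lo..<lo+len}. F x j c s)"
  unfolding lvl_sum[OF assms] F_def
  by (subst sum.swap) (simp add: numeral_2_eq_2 lessThan_Suc add.commute)

lemma enc_child_lt_m:
  assumes "j < q" "c < 2^j" "b < 2" "s < t"
  shows "enc (j+1) (2*c+b) s < m"
  using enc_lt_B[of "j+1" "2*c+b" s] child_lt[OF assms(1-3)] assms m_B by simp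

lemma F_mono:
  assumes "j < q" "c < 2^j" "s < t" "\<And>i. i < m \<Longrightarrow> x i \<le> y i"
  shows "F x j c s \<le> F y j c s"
  using assms enc_child_lt_m[OF assms(1,2), of 0 s] enc_child_lt_m[OF assms(1,2), of 1 s]
  unfolding F_def by (simp add: add_mono)

lemma F_nonneg:
  assumes "j < q" "c < 2^j" "s < t" "\<And>i. i < m \<Longrightarrow> 0 \<le> x i"
  shows "0 \<le> F x j c s"
  using assms enc_child_lt_m[OF assms(1,2), of 0 s] enc_child_lt_m[OF assms(1,2), of 1 s]
  unfolding F_def by simp

lemma feasible_con:
  assumes "feasible m cs x" "C \<in> set cs"
  shows "snd C \<le> (\<Sum>i<m. fst C i * x i)"
  using assms unfolding feasible_def by (auto simp: case_prod_beta')

lemma inner: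
  assumes jq: "j < q" and cj: "c < 2^j" and gcs: "\<forall>C\<in>set cs. goodc C"
  shows "l \<le> a \<Longrightarrow> \<exists>ext lo. (\<forall>C\<in>set (cs @ ext). goodc C) \<and> lo + 2^(a-l) \<le> t \<and>
     (\<forall>C\<in>set ext. snd C = 1 \<and> (\<forall>b<2. \<forall>s. lo \<le> s \<and> s < lo + 2^(a-l) \<longrightarrow> fst C (enc (j+1) (2*c+b) s) = 1)) \<and>
     real l / 2 \<le> (\<Sum>s\<in>{..<t} - {lo..<lo+2^(a-l)}. F (X (cs @ ext)) j c s)"
proof (induction l)
  case 0
  show ?case
    by (rule exI[of _ "[]"], rule exI[of _ 0]) (use gcs in \<open>simp add: t_def atLeast0LessThan\<close>)
next
  case (Suc l)
  then obtain ext lo where g: "\<forall>C\<in>set (cs @ ext). goodc C" and lt: "lo + 2^(a-l) \<le> t"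
    and ext: "\<forall>C\<in>set ext. snd C = 1 \<and> (\<forall>b<2. \<forall>s. lo \<le> s \<and> s < lo + 2^(a-l) \<longrightarrow> fst C (enc (j+1) (2*c+b) s) = 1)"
    and ms: "real l / 2 \<le> (\<Sum>s\<in>{..<t} - {lo..<lo+2^(a-l)}. F (X (cs @ ext)) j c s)"
    by auto
  define h where "h = (2::nat)^(a - Suc l)"
  have len: "2^(a-l) = 2 * h" using Suc.prems
    by (simp add: h_def) (metis Suc_diff_Suc power_Suc Suc_le_lessD)
  define C where "C = lvl j c lo (2*h)"
  have gC: "goodc C" unfolding C_def
    by (rule goodc_lvl[OF jq cj]) (use lt len in \<open>auto simp: h_def\<close>)
  define cs' where "cs' = cs @ ext @ [C]"
  have g': "\<forall>C\<in>set cs'. goodc C" using g gC by (auto simp: cs'_def)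
  define x where "x = X cs'"
  have fx: "feasible m cs' x" unfolding x_def by (rule X_feasible[OF g'])
  have xnn: "0 \<le> x i" if "i < m" for i using fx that by (simp add: feasible_def)
  have mono: "X (cs @ ext) i \<le> x i" if "i < m" for i
    using X_mono[of "cs @ ext" "[C]" i] g' that by (simp add: x_def cs'_def)
  have "1 \<le> (\<Sum>i<m. fst C i * x i)"
    using feasible_con[OF fx, of C] by (simp add: cs'_def C_def lvl_def)
  also have "\<dots> = (\<Sum>s\<in>{lo..<lo+2*h}. F x j c s)"
    unfolding C_def by (rule lvl_sumF[OF jq cj]) (use lt len in auto)
  also have "\<dots> = (\<Sum>s\<in>{lo..<lo+h}. F x j c s) + (\<Sum>s\<in>{lo+h..<lo+2*h}. F x j c s)"
    by (rule sum.atLeastLessThan_concat[symmetric]) auto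
  finally have tot: "1 \<le> (\<Sum>s\<in>{lo..<lo+h}. F x j c s) + (\<Sum>s\<in>{lo+h..<lo+2*h}. F x j c s)" .
  have old: "real l / 2 \<le> (\<Sum>s\<in>{..<t} - {lo..<lo+2*h}. F x j c s)"
  proof -
    have "(\<Sum>s\<in>{..<t} - {lo..<lo+2*h}. F (X (cs @ ext)) j c s) \<le> (\<Sum>s\<in>{..<t} - {lo..<lo+2*h}. F x j c s)"
      by (rule sum_mono, rule F_mono[OF jq cj]) (auto intro: mono)
    then show ?thesis using ms len by simp
  qed
  have ext': "\<forall>C'\<in>set (ext @ [C]). snd C' = 1 \<and> (\<forall>b<2. \<forall>s. lo \<le> s \<and> s < lo + 2*h \<longrightarrow> fst C' (enc (j+1) (2*c+b) s) = 1)"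
  proof -
    have "fst C (enc (j+1) (2*c+b) s) = 1" if "b < 2" "lo \<le> s" "s < lo + 2*h" for b s
      using that by (force simp: C_def lvl_def lvar_def)
    then show ?thesis using ext len by (auto simp: C_def lvl_def)
  qed
  have hsub: "a - Suc l = a - l - 1" by simp
  show ?case
  proof (cases "(\<Sum>s\<in>{lo..<lo+h}. F x j c s) \<le> (\<Sum>s\<in>{lo+h..<lo+2*h}. F x j c s)")
    case True
    have eq: "{..<t} - {lo..<lo+h} = ({..<t} - {lo..<lo+2*h}) \<union> {lo+h..<lo+2*h}"
      using lt len by auto
    have "(\<Sum>s\<in>{..<t} - {lo..<lo+h}. F x j c s) = (\<Sum>s\<in>{..<t} - {lo..<lo+2*h}. F x j c s) + (\<Sum>s\<in>{lo+h..<lo+2*h}. F x j c s)"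
      unfolding eq by (rule sum.union_disjoint) auto
    moreover have "1/2 \<le> (\<Sum>s\<in>{lo+h..<lo+2*h}. F x j c s)" using tot True by linarith
    ultimately have "real (Suc l) / 2 \<le> (\<Sum>s\<in>{..<t} - {lo..<lo+h}. F x j c s)" using old by simp
    then show ?thesis
      using g' ext' lt len
      by (intro exI[of _ "ext @ [C]"] exI[of _ lo]) (auto simp: cs'_def x_def h_def)
  next
    case False
    have eq: "{..<t} - {lo+h..<lo+h+h} = ({..<t} - {lo..<lo+2*h}) \<union> {lo..<lo+h}"
      using lt len by auto
    have "(\<Sum>s\<in>{..<t} - {lo+h..<lo+h+h}. F x j c s) = (\<Sum>s\<in>{..<t} - {lo..<lo+2*h}. F x j c s) + (\<Sum>s\<in>{lo..<lo+h}. F x j c s)"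
      unfolding eq by (rule sum.union_disjoint) auto
    moreover have "1/2 \<le> (\<Sum>s\<in>{lo..<lo+h}. F x j c s)" using tot False by linarith
    ultimately have "real (Suc l) / 2 \<le> (\<Sum>s\<in>{..<t} - {lo+h..<lo+h+h}. F x j c s)" using old by simp
    then show ?thesis
      using g' ext' lt len
      by (intro exI[of _ "ext @ [C]"] exI[of _ "lo+h"]) (auto simp: cs'_def x_def h_def)
  qed
qed

end



context lb
begin

definition delta :: "nat \<Rightarrow> nat \<Rightarrow> real" where "delta i0 i = (if i = i0 then 1 else 0)"

definition Pinv :: "nat \<Rightarrow> cover list \<Rightarrow> nat \<Rightarrow> (nat \<Rightarrow> real) \<Rightarrow> bool" where
  "Pinv j cs c xs \<longleftrightarrow> (\<forall>C\<in>set cs. goodc C) \<and> dummy \<in> set cs \<and> c < 2^j \<and> feasible m cs xs \<and>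
     (\<forall>k<2^q. rowload k xs \<le> (if k div 2^(q-j) = c then 0 else 1)) \<and>
     (\<forall>j'\<in>{1..j}. real a / 4 \<le> (\<Sum>s<t. X cs (enc j' (c div 2^(j-j')) s)))"

lemma con_mono:
  assumes "goodc C" "\<And>i. i < m \<Longrightarrow> x i \<le> y i"
  shows "(\<Sum>i<m. fst C i * x i) \<le> (\<Sum>i<m. fst C i * y i)"
proof (rule sum_mono)
  fix i assume "i \<in> {..<m}"
  then have "fst C i = 0 \<or> fst C i = 1" using assms(1) by (auto simp: goodc_def zero_one_row_def)
  then show "fst C i * x i \<le> fst C i * y i" using assms(2) \<open>i \<in> {..<m}\<close> by auto
qed

lemma con_nonneg:
  assumes "goodc C" "\<And>i. i < m \<Longrightarrow> 0 \<le> x i"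
  shows "\<And>i. i \<in> {..<m} \<Longrightarrow> 0 \<le> fst C i * x i"
proof -
  fix i assume i: "i \<in> {..<m}"
  then have "fst C i = 0 \<or> fst C i = 1" using assms(1) by (auto simp: goodc_def zero_one_row_def)
  then show "0 \<le> fst C i * x i" using assms(2) i by auto
qed

lemma base: "Pinv 0 [dummy] 0 (delta B)"
proof -
  have "(\<Sum>i<m. fst dummy i * delta B i) = 1"
  proof -
    have "(\<Sum>i<m. fst dummy i * delta B i) = (\<Sum>i<m. if i = B then 1 else 0)"
      using d_pos by (intro sum.cong) (auto simp: dummy_def delta_def)
    also have "\<dots> = 1" using d_pos by (auto simp: m_def)
    finally show ?thesis .
  qed
  hence feas: "feasible m [dummy] (delta B)"
    by (simp add: feasible_def delta_def dummy_def)
  have rl: "rowload k (delta B) = 0" if "k < 2^q" for k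
    unfolding rowload_def
  proof (rule sum.neutral, rule ballI)
    fix js assume "js \<in> RA"
    then have "rowvar k js < B" using rowvar_lt[OF that] by auto
    then show "delta B (rowvar k js) = 0" by (simp add: delta_def)
  qed
  show ?thesis unfolding Pinv_def using goodc_dummy feas rl by simp
qed

lemma rowload_add_delta:
  assumes k: "k < 2^q" and j: "j < q" and sib: "sib < 2^q" and lo: "lo < t"
  shows "rowload k (\<lambda>i. xs i + delta (enc (j+1) sib lo) i) =
         rowload k xs + (if k div 2^(q-(j+1)) = sib then 1 else 0)"
proof -
  have kd: "k div 2^(q - j') < 2^q" for j' using k by (meson div_le_dividend le_less_trans)
  have "rowload k (\<lambda>i. xs i + delta (enc (j+1) sib lo) i) = rowload k xs + rowload k (delta (enc (j+1) sib lo))"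
    unfolding rowload_def by (simp add: sum.distrib)
  moreover have "rowload k (delta (enc (j+1) sib lo)) = (\<Sum>js\<in>RA. if js = (j+1, lo) then (if k div 2^(q-(j+1)) = sib then 1 else 0) else 0)"
    unfolding rowload_def
  proof (rule sum.cong[OF refl])
    fix js assume "js \<in> RA"
    then obtain j' s where js: "js = (j', s)" "s < t" by (auto simp: RA_def)
    show "delta (enc (j+1) sib lo) (rowvar k js) = (if js = (j+1, lo) then (if k div 2^(q-(j+1)) = sib then 1 else 0) else 0)"
      using enc_inj[OF kd js(2) sib lo, of j' j' "j+1"] js
      by (auto simp: delta_def rowvar_def)
  qed
  moreover have "(j+1, lo) \<in> RA" using j lo by (simp add: RA_def)
  ultimately show ?thesis by (simp add: finite_RA)
qed

lemma div_step: "(k::nat) div 2^(q - j) = (k div 2^(q-(j+1))) div 2" if "j < q"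
proof -
  have "q - j = Suc (q - (j+1))" using that by simp
  then show ?thesis by (metis div_mult2_eq power_Suc2)
qed

lemma phase:
  assumes jq: "j < q" and P: "Pinv j cs c xs"
  shows "\<exists>cs' c' xs'. Pinv (j+1) cs' c' xs'"
proof -
  from P have gcs: "\<forall>C\<in>set cs. goodc C" and dum: "dummy \<in> set cs" and cj: "c < 2^j"
    and fxs: "feasible m cs xs" and rl: "\<forall>k<2^q. rowload k xs \<le> (if k div 2^(q-j) = c then 0 else 1)"
    and pm: "\<forall>j'\<in>{1..j}. real a / 4 \<le> (\<Sum>s<t. X cs (enc j' (c div 2^(j-j')) s))"
    unfolding Pinv_def by auto
  obtain ext lo where g: "\<forall>C\<in>set (cs @ ext). goodc C" and lt: "lo + 2^(a-a) \<le> t"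
    and ext: "\<forall>C\<in>set ext. snd C = 1 \<and> (\<forall>b<2. \<forall>s. lo \<le> s \<and> s < lo + 2^(a-a) \<longrightarrow> fst C (enc (j+1) (2*c+b) s) = 1)"
    and ms: "real a / 2 \<le> (\<Sum>s\<in>{..<t} - {lo..<lo+2^(a-a)}. F (X (cs @ ext)) j c s)"
    using inner[OF jq cj gcs, of a] by blast
  define y where "y = X (cs @ ext)"
  have fy: "feasible m (cs @ ext) y" unfolding y_def by (rule X_feasible[OF g])
  have ynn: "0 \<le> y i" if "i < m" for i using fy that by (simp add: feasible_def)
  have lo: "lo < t" using lt by simp
  have "real a / 2 \<le> (\<Sum>s<t. F y j c s)"
    using ms unfolding y_def[symmetric]
    by (rule order_trans, intro sum_mono2) (auto intro: F_nonneg[OF jq cj] ynn)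
  also have "\<dots> = (\<Sum>s<t. y (enc (j+1) (2*c+0) s)) + (\<Sum>s<t. y (enc (j+1) (2*c+1) s))"
    by (simp add: F_def sum.distrib)
  finally have tot: "real a / 2 \<le> (\<Sum>s<t. y (enc (j+1) (2*c+0) s)) + (\<Sum>s<t. y (enc (j+1) (2*c+1) s))" .
  obtain b where b: "b < 2" and bm: "real a / 4 \<le> (\<Sum>s<t. y (enc (j+1) (2*c+b) s))"
  proof (cases "real a / 4 \<le> (\<Sum>s<t. y (enc (j+1) (2*c+0) s))")
    case True then show ?thesis using that[of 0] by simp
  next
    case False then show ?thesis using that[of 1] tot by simp
  qed
  define c' where "c' = 2*c+b"
  define sib where "sib = 2*c+(1-b)"
  have sib2: "sib < 2^q" unfolding sib_def by (rule child_lt[OF jq cj]) simp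
  define i0 where "i0 = enc (j+1) sib lo"
  have i0m: "i0 < m" unfolding i0_def sib_def by (rule enc_child_lt_m[OF jq cj _ lo]) simp
  define xs' where "xs' = (\<lambda>i. xs i + delta i0 i)"
  have xsnn: "0 \<le> xs i" if "i < m" for i using fxs that by (simp add: feasible_def)
  have xs'nn: "0 \<le> xs' i" if "i < m" for i using xsnn[OF that] by (simp add: xs'_def delta_def)
  have feas': "feasible m (cs @ ext) xs'"
    unfolding feasible_def
  proof (intro conjI allI impI ballI)
    fix i assume "i < m" then show "0 \<le> xs' i" by (rule xs'nn)
  next
    fix Cc assume Cc: "Cc \<in> set (cs @ ext)"
    obtain C cc where Ce: "Cc = (C, cc)" by fastforce
    have gC: "goodc (C, cc)" using g Cc Ce by auto
    show "case Cc of (C, c) \<Rightarrow> c \<le> (\<Sum>i<m. C i * xs' i)"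
    proof (cases "Cc \<in> set cs")
      case True
      have "cc \<le> (\<Sum>i<m. C i * xs i)" using feasible_con[OF fxs True] Ce by simp
      also have "\<dots> \<le> (\<Sum>i<m. C i * xs' i)"
        using con_mono[OF gC, of xs xs'] by (simp add: xs'_def delta_def)
      finally show ?thesis using Ce by simp
    next
      case False
      then have "Cc \<in> set ext" using Cc by simp
      then have cc1: "cc = 1" and Ci0: "C i0 = 1" using ext Ce
        by (auto simp: i0_def sib_def) 
      have "C i0 * xs' i0 \<le> (\<Sum>i<m. C i * xs' i)"
        using con_nonneg[OF gC xs'nn] i0m by (intro member_le_sum) auto
      moreover have "1 \<le> xs' i0" using xsnn[OF i0m] by (simp add: xs'_def delta_def)
      ultimately show ?thesis using Ce cc1 Ci0 by simp
    qed
  qed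
  have rl': "\<forall>k<2^q. rowload k xs' \<le> (if k div 2^(q-(j+1)) = c' then 0 else 1)"
  proof (intro allI impI)
    fix k :: nat assume k: "k < 2^q"
    have eq: "rowload k xs' = rowload k xs + (if k div 2^(q-(j+1)) = sib then 1 else 0)"
      unfolding xs'_def i0_def by (rule rowload_add_delta[OF k jq sib2 lo])
    have ds: "k div 2^(q - j) = (k div 2^(q-(j+1))) div 2" by (rule div_step[OF jq])
    have "rowload k xs \<le> (if k div 2^(q-j) = c then 0 else 1)" using rl k by auto
    moreover have "sib \<noteq> c'" using b by (cases b) (auto simp: sib_def c'_def)
    moreover have "sib div 2 = c" "c' div 2 = c" using b by (auto simp: sib_def c'_def)
    ultimately show "rowload k xs' \<le> (if k div 2^(q-(j+1)) = c' then 0 else 1)"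
      using eq ds by (cases "k div 2^(q-(j+1)) = c'"; cases "k div 2^(q-(j+1)) = sib") (auto split: if_splits)
  qed
  have pm': "\<forall>j'\<in>{1..j+1}. real a / 4 \<le> (\<Sum>s<t. X (cs @ ext) (enc j' (c' div 2^(j+1-j')) s))"
  proof
    fix j' assume j': "j' \<in> {1..j+1}"
    show "real a / 4 \<le> (\<Sum>s<t. X (cs @ ext) (enc j' (c' div 2^(j+1-j')) s))"
    proof (cases "j' = j+1")
      case True then show ?thesis using bm by (simp add: y_def c'_def)
    next
      case False
      then have j'j: "j' \<in> {1..j}" using j' by auto
      have cd: "c' div 2^(j+1-j') = c div 2^(j-j')"
      proof -
        have "j + 1 - j' = (j - j') + 1" using j'j by auto
        then show ?thesis using b by (simp add: c'_def div_mult2_eq power_add)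
      qed
      have cq: "c div 2^(j-j') < 2^q"
      proof -
        have "c div 2^(j-j') \<le> c" by simp
        also have "c < 2^j" by (rule cj)
        also have "(2::nat)^j \<le> 2^q" using jq by (intro power_increasing) auto
        finally show ?thesis .
      qed
      have "real a / 4 \<le> (\<Sum>s<t. X cs (enc j' (c div 2^(j-j')) s))" using pm j'j by auto
      also have "\<dots> \<le> (\<Sum>s<t. X (cs @ ext) (enc j' (c div 2^(j-j')) s))"
      proof (rule sum_mono)
        fix s assume "s \<in> {..<t}"
        then have "enc j' (c div 2^(j-j')) s < m"
          using enc_lt_B[of j' "c div 2^(j-j')" s] cq j'j jq m_B by auto
        then show "X cs (enc j' (c div 2^(j-j')) s) \<le> X (cs @ ext) (enc j' (c div 2^(j-j')) s)"
          by (rule X_mono[OF g])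
      qed
      finally show ?thesis using cd by simp
    qed
  qed
  have "c' < 2^(j+1)" using b cj by (simp add: c'_def)
  then have "Pinv (j+1) (cs @ ext) c' xs'"
    unfolding Pinv_def using g dum feas' rl' pm' by auto
  then show ?thesis by blast
qed

lemma reach: "j \<le> q \<Longrightarrow> \<exists>cs c xs. Pinv j cs c xs"
proof (induction j)
  case 0 then show ?case using base by blast
next
  case (Suc j)
  then obtain cs c xs where "Pinv j cs c xs" by auto
  then show ?case using phase[of j cs c xs] Suc.prems by auto
qed

end



context lb
begin

lemma viol_eq: "violation m Pm pv x k = (if k < 2^q then rowload k x else 0)"
  unfolding violation_def load_eq by (simp add: pv_def)

lemma rowvar_lt_m': "k < 2^q \<Longrightarrow> js \<in> RA \<Longrightarrow> rowvar k js < m"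
  using rowvar_lt_m by auto

lemma rowload_nonneg: "k < 2^q \<Longrightarrow> (\<And>i. i < m \<Longrightarrow> 0 \<le> x i) \<Longrightarrow> 0 \<le> rowload k x"
  unfolding rowload_def by (rule sum_nonneg) (auto intro: rowvar_lt_m')

lemma obj_nonneg: "0 \<le> lp_objective r p m Pm pv x"
  by (simp add: lp_objective_def)

lemma lb_bound:
  assumes comp: "competitive r d p alg \<rho>" and qp: "real q \<le> p" and p1: "1 \<le> p"
  shows "real q * real a / 8 \<le> \<rho>"
proof -
  obtain cs c xs where P: "Pinv q cs c xs" using reach[of q] by auto
  from P have gcs: "\<forall>C\<in>set cs. goodc C" and dum: "dummy \<in> set cs" and cq: "c < 2^q"
    and fxs: "feasible m cs xs" and rl: "\<forall>k<2^q. rowload k xs \<le> (if k div 2^(q-q) = c then 0 else 1)"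
    and pm: "\<forall>j'\<in>{1..q}. real a / 4 \<le> (\<Sum>s<t. X cs (enc j' (c div 2^(q-j')) s))"
    unfolding Pinv_def by auto
  have wf: "wf_instance r d m Pm pv cs" using gcs wf_iff by simp
  have ms: "max_sparsity_eq r d m Pm cs"
    unfolding max_sparsity_eq_def using dum support_dummy by (auto simp: case_prod_beta' intro!: bexI[of _ dummy])
  have ineq: "lp_objective r p m Pm pv (X cs) \<le> \<rho> * opt_value r p m Pm pv cs"
    using comp wf ms unfolding competitive_def X_def by blast
  have bdd: "bdd_below (lp_objective r p m Pm pv ` {x. feasible m cs x})"
    by (rule bdd_belowI[of _ 0]) (auto simp: obj_nonneg)
  have opt_le: "opt_value r p m Pm pv cs \<le> lp_objective r p m Pm pv xs"
    unfolding opt_value_def by (rule cInf_lower) (use fxs bdd in auto)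
  have opt_ge: "0 \<le> opt_value r p m Pm pv cs"
    unfolding opt_value_def by (rule cInf_greatest) (use fxs in \<open>auto simp: obj_nonneg\<close>)
  have xsnn: "0 \<le> xs i" if "i < m" for i using fxs that by (simp add: feasible_def)
  have "(\<Sum>k<r. violation m Pm pv xs k powr p) \<le> (\<Sum>k<r. if k < 2^q then 1 else 0)"
  proof (rule sum_mono)
    fix k assume "k \<in> {..<r}"
    show "violation m Pm pv xs k powr p \<le> (if k < 2^q then 1 else 0)"
    proof (cases "k < 2^q")
      case True
      have "0 \<le> rowload k xs" by (rule rowload_nonneg[OF True xsnn])
      moreover have "rowload k xs \<le> 1" using rl True by (auto split: if_splits)
      ultimately show ?thesis using True p1 by (simp add: viol_eq powr_le1)
    qed (simp add: viol_eq)
  qed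
  also have "\<dots> = real (card {k. k < r \<and> k < 2^q})"
    by (simp add: sum.If_cases Int_def)
  also have "{k. k < r \<and> k < 2^q} = {..<2^q}" using qr by auto
  finally have sle: "(\<Sum>k<r. violation m Pm pv xs k powr p) \<le> 2^q" by simp
  have "lp_objective r p m Pm pv xs \<le> (2^q) powr (1/p)"
    unfolding lp_objective_def by (rule powr_mono2) (use sle p1 in \<open>auto intro: sum_nonneg\<close>)
  also have "(2^q::real) powr (1/p) = 2 powr (real q / p)"
    by (simp add: powr_realpow[symmetric] powr_powr)
  also have "\<dots> \<le> 2 powr 1" using qp p1 by (intro powr_mono) auto
  finally have obj_xs: "lp_objective r p m Pm pv xs \<le> 2" by simp
  have fX: "feasible m cs (X cs)" by (rule X_feasible[OF gcs])
  have Xnn: "0 \<le> X cs i" if "i < m" for i using fX that by (simp add: feasible_def)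
  have "rowload c (X cs) = (\<Sum>j\<in>{1..q}. \<Sum>s<t. X cs (enc j (c div 2^(q-j)) s))"
    unfolding rowload_def RA_def rowvar_def sum.cartesian_product by (rule sum.cong[OF refl]) auto
  also have "\<dots> \<ge> (\<Sum>j\<in>{1..q}. real a / 4)" by (rule sum_mono) (use pm in auto)
  finally have L: "real q * real a / 4 \<le> rowload c (X cs)" by simp
  have qa: "0 < real q * real a / 4" using q1 a1 by simp
  have "rowload c (X cs) = (violation m Pm pv (X cs) c powr p) powr (1/p)"
    using cq L qa p1 by (simp add: viol_eq powr_powr)
  also have "\<dots> \<le> lp_objective r p m Pm pv (X cs)"
    unfolding lp_objective_def
  proof (rule powr_mono2)
    show "violation m Pm pv (X cs) c powr p \<le> (\<Sum>k<r. violation m Pm pv (X cs) k powr p)"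
      using cq qr by (intro member_le_sum) auto
  qed (use p1 in auto)
  finally have objX: "real q * real a / 4 \<le> lp_objective r p m Pm pv (X cs)" using L by linarith
  have "0 < \<rho> * opt_value r p m Pm pv cs" using objX ineq qa by linarith
  then have rpos: "0 < \<rho>" using opt_ge by (simp add: zero_less_mult_iff)
  have "\<rho> * opt_value r p m Pm pv cs \<le> \<rho> * 2"
    using rpos opt_le obj_xs by (intro mult_left_mono) auto
  then show ?thesis using objX ineq by linarith
qed

end



lemma main_bound:
  fixes r d :: nat and p \<rho> :: real
  assumes r16: "16 \<le> real r" and dL: "16 * log 2 (real r) \<le> real d" and p1: "1 \<le> p"
    and pL: "p \<le> log 2 (real r)" and V: "valid_online_alg r d alg" and C: "competitive r d p alg \<rho>"
  shows "1/32 * p * ln (real d / log 2 (real r)) \<le> \<rho>"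
proof -
  define L where "L = log 2 (real r)"
  have rpos: "0 < real r" using r16 by simp
  have L4: "4 \<le> L" unfolding L_def using r16 by (subst le_log_iff) auto
  define q where "q = nat \<lfloor>p\<rfloor>"
  have qf: "real q = of_int \<lfloor>p\<rfloor>" using p1 by (simp add: q_def)
  have qp: "real q \<le> p" using qf by simp
  have qp2: "p < real q + 1" using qf by linarith
  have q1: "1 \<le> q" using p1 qf by linarith
  have qp3: "p \<le> 2 * real q" using qp2 q1 by linarith
  have "real (2^q) = 2 powr real q" by (simp add: powr_realpow)
  also have "\<dots> \<le> 2 powr L" using qp pL by (intro powr_mono) (auto simp: L_def)
  also have "\<dots> = real r" using rpos by (simp add: L_def)
  finally have qr: "2^q \<le> r" by linarith
  have "real (16 * q) \<le> real d" using dL qp pL by simp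
  then have d16: "16 * q \<le> d" by linarith
  define n where "n = d div (2*q)"
  have n8: "8 \<le> n" unfolding n_def using d16 q1 by (subst less_eq_div_iff_mult_less_eq) auto
  obtain a where a: "2^a \<le> n" "n < 2^(a+1)" using ex_power_ivl1[of 2 n] n8 by auto
  have "2 * q * 2^a \<le> 2 * q * n" using a by simp
  also have "2 * q * n \<le> d" unfolding n_def by (metis div_times_less_eq_dividend mult.commute)
  finally have qd: "2 * q * 2^a \<le> d" .
  have a1: "1 \<le> a"
  proof (rule ccontr)
    assume "\<not> 1 \<le> a" then have "a = 0" by simp
    then show False using a n8 by simp
  qed
  have "d < 2 * q + n * (2 * q)" unfolding n_def using q1 by (intro dividend_less_div_times) simp
  also have "\<dots> = 2 * q * (n + 1)" by (simp add: algebra_simps)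
  also have "\<dots> \<le> 2 * q * 2^(a+1)" using a by (intro mult_left_mono) auto
  finally have dlt0: "d < 2 * q * 2^(a+1)" .
  have "2 * q * 2^(a+1) = 4 * q * 2^a" by simp
  with dlt0 have "d < 4 * q * 2^a" by simp
  then have "real d < real (4 * q * 2^a)" by (simp only: of_nat_less_iff)
  then have dlt: "real d < 4 * real q * 2^a" by simp
  interpret lb alg r d q a using V q1 qr a1 qd by unfold_locales
  have rho: "real q * real a / 8 \<le> \<rho>" by (rule lb_bound[OF C qp p1])
  define X where "X = real d / L"
  have Lpos: "0 < L" using L4 by simp
  have X16: "16 \<le> X" unfolding X_def using dL Lpos by (simp add: L_def field_simps)
  have qL: "real q \<le> L" using qp pL by (simp add: L_def)
  have "real d < 4 * L * 2^a"
  proof -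
    have "4 * real q * 2^a \<le> 4 * L * 2^a" using qL by simp
    then show ?thesis using dlt by linarith
  qed
  then have "X < 4 * 2^a"
    unfolding X_def using Lpos by (simp add: divide_less_eq mult.commute mult.left_commute)
  moreover have "(2::real) powr (real a + 2) = 4 * 2^a" by (simp add: powr_add powr_realpow)
  ultimately have "X < 2 powr (real a + 2)" by simp
  then have la: "log 2 X < real a + 2" using X16 by (subst log_less_iff) auto
  have l4: "4 \<le> log 2 X" using X16 by (subst le_log_iff) auto
  have lnX: "ln X \<le> log 2 X"
  proof -
    have "ln X = log 2 X * ln 2" by (simp add: log_def)
    also have "\<dots> \<le> log 2 X * 1" using l4 ln_2_less_1 by (intro mult_left_mono) auto
    finally show ?thesis by simp
  qed
  have ln2a: "ln X \<le> 2 * real a" using lnX la l4 by linarith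
  have "1/32 * p * ln X \<le> 1/32 * p * (2 * real a)" using ln2a p1 by (intro mult_left_mono) auto
  also have "\<dots> = p * real a / 16" by simp
  also have "\<dots> \<le> (2 * real q) * real a / 16" using qp3 by (intro divide_right_mono mult_right_mono) auto
  also have "\<dots> = real q * real a / 8" by simp
  finally show ?thesis using rho by (simp add: X_def L_def)
qed

theorem theorem3:
  shows "\<exists>c>0. \<exists>N::real. \<forall>(r::nat) (d::nat) (p::real).
           N \<le> real r \<and> N * log 2 (real r) \<le> real d \<and> 1 \<le> p \<and> p \<le> log 2 (real r) \<longrightarrow>
           (\<forall>alg \<rho>. valid_online_alg r d alg \<and> competitive r d p alg \<rho> \<longrightarrow>
              c * p * ln (real d / log 2 (real r)) \<le> \<rho>)"
  apply (rule exI[where x="1/32"])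
  apply (rule conjI)
   apply simp
  apply (rule exI[where x=16])
  using main_bound by blast


end
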